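(* Let $(k,\alpha)\in\Upsilon$, $w\in\operatorname{rext}(L_{k,\alpha})$, $\bar w\in\operatorname{rext}(w,L_{k,\alpha})$, let $x\in\Sigma_k$ be a letter that is a recurrent factor of $\bar w$, and let $t\in L^{\mathbb N,R}_{k,\alpha}$ with $\operatorname{occur}(t,x)=0$. Then there are finite words $w_1,w_2,g\in\Sigma_k^*$ such that $(w_1,w_2,x,g,t)\in\Gamma(k,\alpha)$ and $w$ is a prefix of $w_1w_2xg$.
   Context: $\Sigma_k$ is an alphabet with $k$ letters. For a nonempty finite word $r$ and a rational $\beta\ge 1$ with $\beta|r|$ an integer, the $\beta$-power $r^\beta$ is the word $rr\cdots rt$ of length $\beta|r|$, where $t$ is a prefix of $r$. For rational $\alpha\ge1$, a word is $\alpha$-power free if it has no factor that is a $\beta$-power with $\beta\ge\alpha$, and $\alpha^+$-power free if it has no factor that is a $\beta$-power with $\beta>\alpha$; "$\alpha$" may denote a rational number or a symbol $\alpha^+$. $L_{k,\alpha}$ is the set of finite $\alpha$-power free words over $\Sigma_k$, and $L^{\mathbb N,R}_{k,\alpha}$ the set of right infinite words over $\Sigma_k$ all of whose finite factors lie in $L_{k,\alpha}$. $\Upsilon$ is the set of pairs: $(k,\alpha)$ with $k=3$ and rational $\alpha>2$; $(k,\alpha)$ with $k>3$ and rational $\alpha\ge2$; $(k,\alpha^+)$ with $k\ge3$ and rational $\alpha\ge2$. $\operatorname{occur}(w,s)$ is the number of occurrences of a nonempty word $s$ as a factor of $w$; $s$ is recurrent in an infinite word $w$ if $\operatorname{occur}(w,s)=\infty$.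 Prefixes include the empty word and the word itself if finite. A word $w\in L$ is right extendable in $L$ if for every $n\in\mathbb N$ there is $u\in L$ with $|u|=n$ and $wu\in L$; $\operatorname{rext}(L)$ is the set of such words, and for $w\in\operatorname{rext}(L)$, $\operatorname{rext}(w,L)$ is the set of right infinite words all of whose finite prefixes lie in $L$ and which have $w$ as a prefix. For $(k,\alpha)\in\Upsilon$, $(w_1,w_2,x,g,t)\in\Gamma(k,\alpha)$ means: $w_1,w_2,g\in\Sigma_k^*$; $x\in\Sigma_k$; $w_1w_2xg\in L_{k,\alpha}$; $t\in L^{\mathbb N,R}_{k,\alpha}$; $\operatorname{occur}(t,x)=0$; $g$ is a prefix of $t$; $\operatorname{occur}(w_2xgy,xgy)=1$, where $y\in\Sigma_k$ is the letter with $gy$ a prefix of $t$; and $\operatorname{occur}(w_2,x)\ge\operatorname{occur}(w_1,x)$. *)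

theory Defs
  imports Main "HOL-Library.Extended_Nat" "HOL-Library.Sublist"
begin

text \<open>Letters of the alphabet Sigma_k are the naturals 0,...,k-1; finite words are lists,
right infinite words are functions nat => nat.\<close>

definition Sigma :: "nat \<Rightarrow> nat set" where
  "Sigma k = {0..<k}"

text \<open>An exponent bound: either a rational alpha, or the symbol alpha+.\<close>
datatype pexp = Exact rat | Plus rat

definition is_power :: "nat list \<Rightarrow> rat \<Rightarrow> bool" where
  "is_power u \<beta> \<longleftrightarrow> \<beta> \<ge> 1 \<and> (\<exists>r t n. r \<noteq> [] \<and> n \<ge> 1 \<and> prefix t r \<and>
      u = concat (replicate n r) @ t \<and> of_nat (length u) = \<beta> * of_nat (length r))"

definition exceeds :: "pexp \<Rightarrow> rat \<Rightarrow> bool" where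
  "exceeds a \<beta> = (case a of Exact \<alpha> \<Rightarrow> \<beta> \<ge> \<alpha> | Plus \<alpha> \<Rightarrow> \<beta> > \<alpha>)"

definition power_free :: "pexp \<Rightarrow> nat list \<Rightarrow> bool" where
  "power_free a w \<longleftrightarrow> \<not> (\<exists>u \<beta>. sublist u w \<and> is_power u \<beta> \<and> exceeds a \<beta>)"

definition Lfin :: "nat \<Rightarrow> pexp \<Rightarrow> nat list set" where
  "Lfin k a = {w. set w \<subseteq> Sigma k \<and> power_free a w}"

definition Linf :: "nat \<Rightarrow> pexp \<Rightarrow> (nat \<Rightarrow> nat) set" where
  "Linf k a = {t. (\<forall>i. t i \<in> Sigma k) \<and> (\<forall>i j. map t [i..<j] \<in> Lfin k a)}"

definition Upsilon :: "(nat \<times> pexp) set" where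
  "Upsilon = {(k, a). (k = 3 \<and> (\<exists>\<alpha>. a = Exact \<alpha> \<and> \<alpha> > 2))
                    \<or> (k > 3 \<and> (\<exists>\<alpha>. a = Exact \<alpha> \<and> \<alpha> \<ge> 2))
                    \<or> (k \<ge> 3 \<and> (\<exists>\<alpha>. a = Plus \<alpha> \<and> \<alpha> \<ge> 2))}"

definition occur :: "nat list \<Rightarrow> nat list \<Rightarrow> nat" where
  "occur w s = card {i. i + length s \<le> length w \<and> take (length s) (drop i w) = s}"

definition occur_inf :: "(nat \<Rightarrow> nat) \<Rightarrow> nat list \<Rightarrow> enat" where
  "occur_inf t s = (let S = {i. map t [i..<i + length s] = s} in
                     if finite S then enat (card S) else \<infinity>)"

definition recurrent :: "(nat \<Rightarrow> nat) \<Rightarrow> nat list \<Rightarrow> bool" where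
  "recurrent t s \<longleftrightarrow> s \<noteq> [] \<and> occur_inf t s = \<infinity>"

definition inf_prefix :: "nat list \<Rightarrow> (nat \<Rightarrow> nat) \<Rightarrow> bool" where
  "inf_prefix u t \<longleftrightarrow> map t [0..<length u] = u"

definition rext :: "nat list set \<Rightarrow> nat list set" where
  "rext L = {w. w \<in> L \<and> (\<forall>n. \<exists>u\<in>L. length u = n \<and> w @ u \<in> L)}"

definition rext_inf :: "nat list \<Rightarrow> nat list set \<Rightarrow> (nat \<Rightarrow> nat) set" where
  "rext_inf w L = {t. (\<forall>n. map t [0..<n] \<in> L) \<and> inf_prefix w t}"

definition Gamma :: "nat \<Rightarrow> pexp \<Rightarrow> (nat list \<times> nat list \<times> nat \<times> nat list \<times> (nat \<Rightarrow> nat)) set" where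
  "Gamma k a = {(w1, w2, x, g, t).
      set w1 \<subseteq> Sigma k \<and> set w2 \<subseteq> Sigma k \<and> set g \<subseteq> Sigma k \<and> x \<in> Sigma k \<and>
      w1 @ w2 @ [x] @ g \<in> Lfin k a \<and> t \<in> Linf k a \<and> occur_inf t [x] = 0 \<and>
      inf_prefix g t \<and>
      (let y = t (length g) in occur (w2 @ [x] @ g @ [y]) (x # g @ [y]) = 1) \<and>
      occur w2 [x] \<ge> occur w1 [x]}"

end

theory Submission
  imports Defs
begin
declare upt_Suc[simp del]

lemma upt_app: "a \<le> b \<Longrightarrow> b \<le> c \<Longrightarrow> [a..<b] @ [b..<c] = [a..<c]"
  by (metis le_add_diff_inverse upt_add_eq_append)

lemma occur_x: "occur (map f [a..<b]) [x] = card {i. a \<le> i \<and> i < b \<and> f i = x}"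
proof -
  have "{i. i + length [x] \<le> length (map f [a..<b]) \<and> take (length [x]) (drop i (map f [a..<b])) = [x]}
        = (\<lambda>i. i - a) ` {i. a \<le> i \<and> i < b \<and> f i = x}"
  proof (rule set_eqI, rule iffI)
    fix i assume "i \<in> {i. i + length [x] \<le> length (map f [a..<b]) \<and> take (length [x]) (drop i (map f [a..<b])) = [x]}"
    then have h: "i + 1 \<le> b - a" "take 1 (drop i (map f [a..<b])) = [x]" by auto
    then have "f (a+i) = x" by (simp add: take_map drop_map upt_Suc)
    then show "i \<in> (\<lambda>i. i - a) ` {i. a \<le> i \<and> i < b \<and> f i = x}"
      using h by (intro image_eqI[of _ _ "a+i"]) auto
  next
    fix i assume "i \<in> (\<lambda>i. i - a) ` {i. a \<le> i \<and> i < b \<and> f i = x}"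
    then obtain l where l: "a \<le> l" "l < b" "f l = x" "i = l - a" by auto
    then have "a + i = l" by auto
    then show "i \<in> {i. i + length [x] \<le> length (map f [a..<b]) \<and> take (length [x]) (drop i (map f [a..<b])) = [x]}"
      using l by (auto simp: take_map drop_map upt_Suc)
  qed
  moreover have "inj_on (\<lambda>i. i - a) {i. a \<le> i \<and> i < b \<and> f i = x}"
    by (auto simp: inj_on_def)
  ultimately show ?thesis unfolding occur_def by (simp add: card_image)
qed

lemma build:
  assumes wb: "wbar \<in> rext_inf w (Lfin k a)" and xs: "x \<in> Sigma k" and tL: "t \<in> Linf k a"
    and tx: "occur_inf t [x] = 0" and mp: "m \<le> p"
    and occ: "map wbar [p..<p+j+1] = x # map t [0..<j]"
    and avoid: "\<forall>q. m \<le> q \<longrightarrow> q < p \<longrightarrow> map wbar [q..<q+j+2] \<noteq> x # map t [0..<j+1]"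
    and cnt: "card {i. 0 \<le> i \<and> i<m \<and> wbar i = x} \<le> card {i. m \<le> i \<and> i<p \<and> wbar i = x}"
    and lw: "length w \<le> p+j+1"
  shows "\<exists>w1 w2 g. (w1, w2, x, g, t) \<in> Gamma k a \<and> prefix w (w1 @ w2 @ [x] @ g)"
proof -
  define w1 where "w1 = map wbar [0..<m]"
  define w2 where "w2 = map wbar [m..<p]"
  define g where "g = map t [0..<j]"
  have e1: "w2 @ [x] @ g = map wbar [m..<p+j+1]"
  proof -
    have "[m..<p+j+1] = [m..<p] @ [p..<p+j+1]" using upt_app[of m p "p+j+1"] mp by simp
    then show ?thesis unfolding w2_def g_def by (simp only: map_append occ append.simps)
  qed
  have e2: "w1 @ w2 @ [x] @ g = map wbar [0..<p+j+1]"
  proof -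
    have "[0..<p+j+1] = [0..<m] @ [m..<p+j+1]" using upt_app[of 0 m "p+j+1"] mp by simp
    then show ?thesis unfolding e1 w1_def by (simp only: map_append)
  qed
  have Lall: "map wbar [0..<p+j+1] \<in> Lfin k a" using wb unfolding rext_inf_def by blast
  then have sig: "set (map wbar [0..<p+j+1]) \<subseteq> Sigma k" unfolding Lfin_def by auto
  have tsig: "\<And>i. t i \<in> Sigma k" using tL unfolding Linf_def by auto
  have ipw: "map wbar [0..<length w] = w" using wb unfolding rext_inf_def inf_prefix_def by auto
  have pre: "prefix w (w1 @ w2 @ [x] @ g)"
  proof -
    have "[0..<p+j+1] = [0..<length w] @ [length w..<p+j+1]" using upt_app[of 0 "length w" "p+j+1"] lw by simp
    then have "map wbar [0..<p+j+1] = w @ map wbar [length w..<p+j+1]" using ipw by (simp only: map_append)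
    then show ?thesis unfolding e2 by (rule prefixI)
  qed
  have oc: "occur (w2 @ [x] @ g @ [t (length g)]) (x # g @ [t (length g)]) = 1"
  proof -
    have U: "w2 @ [x] @ g @ [t (length g)] = map wbar [m..<p+j+1] @ [t j]"
      using e1 by (simp add: g_def)
    have s: "x # g @ [t (length g)] = x # map t [0..<j+1]" by (simp add: g_def upt_Suc)
    have "{i. i + length (x # g @ [t (length g)]) \<le> length (w2 @ [x] @ g @ [t (length g)]) \<and>
        take (length (x # g @ [t (length g)])) (drop i (w2 @ [x] @ g @ [t (length g)])) = x # g @ [t (length g)]}
        = {p - m}"
    proof (rule set_eqI, rule iffI)
      fix i assume "i \<in> {i. i + length (x # g @ [t (length g)]) \<le> length (w2 @ [x] @ g @ [t (length g)]) \<and>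
        take (length (x # g @ [t (length g)])) (drop i (w2 @ [x] @ g @ [t (length g)])) = x # g @ [t (length g)]}"
      then have h: "i \<le> p - m" "take (j+2) (drop i (map wbar [m..<p+j+1] @ [t j])) = x # map t [0..<j+1]"
        unfolding U s by (auto simp: g_def w2_def)
      show "i \<in> {p - m}"
      proof (rule ccontr)
        assume "i \<notin> {p-m}"
        then have "i < p - m" using h by auto
        then have "take (j+2) (drop i (map wbar [m..<p+j+1] @ [t j])) = map wbar [m+i..<m+i+j+2]"
          by (simp add: drop_map take_map)
        with h have "map wbar [m+i..<m+i+j+2] = x # map t [0..<j+1]" by simp
        moreover have "m \<le> m+i" "m+i < p" using \<open>i < p - m\<close> by auto
        ultimately show False using avoid[rule_format, of "m+i"] by argo
      qed
    next
      fix i assume "i \<in> {p - m}"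
      then show "i \<in> {i. i + length (x # g @ [t (length g)]) \<le> length (w2 @ [x] @ g @ [t (length g)]) \<and>
        take (length (x # g @ [t (length g)])) (drop i (w2 @ [x] @ g @ [t (length g)])) = x # g @ [t (length g)]}"
        by (simp add: w2_def)
    qed
    then show ?thesis unfolding occur_def by simp
  qed
  have c: "occur w2 [x] \<ge> occur w1 [x]" unfolding w1_def w2_def occur_x using cnt by simp
  have s1: "set w1 \<subseteq> Sigma k" "set w2 \<subseteq> Sigma k" "set g \<subseteq> Sigma k"
  proof -
    have "set (w1 @ w2 @ [x] @ g) \<subseteq> Sigma k" using sig e2 by simp
    then show "set w1 \<subseteq> Sigma k" "set w2 \<subseteq> Sigma k" by auto
    show "set g \<subseteq> Sigma k" using tsig unfolding g_def by auto
  qed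
  have L2: "w1 @ w2 @ [x] @ g \<in> Lfin k a" using Lall e2 by simp
  have ip: "inf_prefix g t" by (simp add: inf_prefix_def g_def)
  have oc': "(let y = t (length g) in occur (w2 @ [x] @ g @ [y]) (x # g @ [y]) = 1)"
    using oc by (simp only: Let_def)
  have "(w1, w2, x, g, t) \<in> Gamma k a"
    unfolding Gamma_def mem_Collect_eq prod.case
    using s1 xs tL tx c L2 ip oc' by blast
  with pre show ?thesis by blast
qed

lemma O_head: "map f [i..<i+l+1] = x # r \<Longrightarrow> f i = x"
  by (simp add: upt_conv_Cons)

lemma O_mono: "map f [i..<i+(l+1)+1] = x # map t [0..<l+1] \<Longrightarrow> map f [i..<i+l+1] = x # map t [0..<l]"
proof -
  assume h: "map f [i..<i+(l+1)+1] = x # map t [0..<l+1]"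
  have "take (l+1) (map f [i..<i+(l+1)+1]) = map f [i..<i+l+1]" by (simp add: take_map)
  moreover have "take (l+1) (x # map t [0..<l+1]) = x # map t [0..<l]" by (simp add: take_map)
  ultimately show ?thesis using h by simp
qed

theorem mainTheorem6:
  fixes k :: nat and a :: pexp and w :: "nat list" and wbar t :: "nat \<Rightarrow> nat" and x :: nat
  assumes "(k, a) \<in> Upsilon"
    and "w \<in> rext (Lfin k a)"
    and "wbar \<in> rext_inf w (Lfin k a)"
    and "x \<in> Sigma k"
    and "recurrent wbar [x]"
    and "t \<in> Linf k a"
    and "occur_inf t [x] = 0"
  shows "\<exists>w1 w2 g. (w1, w2, x, g, t) \<in> Gamma k a \<and> prefix w (w1 @ w2 @ [x] @ g)"
proof -
  define Oc where "Oc l = {i. map wbar [i..<i+l+1] = x # map t [0..<l]}" for l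
  have O0: "infinite (Oc 0)"
  proof -
    have "infinite {i. map wbar [i..<i + length [x]] = [x]}"
      using assms(5) unfolding recurrent_def occur_inf_def Let_def by (auto split: if_splits)
    moreover have "{i. map wbar [i..<i + length [x]] = [x]} = Oc 0" unfolding Oc_def by simp
    ultimately show ?thesis by simp
  qed
  have Osub: "i \<in> Oc (l+1) \<Longrightarrow> i \<in> Oc l" for i l unfolding Oc_def mem_Collect_eq by (rule O_mono)
  have Ox: "i \<in> Oc l \<Longrightarrow> wbar i = x" for i l unfolding Oc_def mem_Collect_eq by (rule O_head)
  show ?thesis
  proof (cases "\<exists>l. finite (Oc l)")
    case False
    define j where "j = length w"
    have "Oc (j+1) \<noteq> {}" using False by (metis finite.emptyI)
    then obtain p0 where "p0 \<in> Oc (j+1)" by auto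
    define p where "p = (LEAST p. p \<in> Oc (j+1))"
    have pin: "p \<in> Oc (j+1)" unfolding p_def using \<open>p0 \<in> Oc (j+1)\<close> by (rule LeastI)
    have avoid: "\<forall>q. 0 \<le> q \<longrightarrow> q < p \<longrightarrow> map wbar [q..<q+j+2] \<noteq> x # map t [0..<j+1]"
    proof (intro allI impI)
      fix q assume "0 \<le> q" "q < p"
      then have "q \<notin> Oc (j+1)" unfolding p_def using not_less_Least by blast
      then show "map wbar [q..<q+j+2] \<noteq> x # map t [0..<j+1]" unfolding Oc_def
        by (simp add: add.assoc)
    qed
    have occ: "map wbar [p..<p+j+1] = x # map t [0..<j]" using Osub[OF pin] unfolding Oc_def by simp
    show ?thesis
      by (rule build[OF assms(3,4,6,7) _ occ avoid]) (auto simp: j_def)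
  next
    case True
    define l0 where "l0 = (LEAST l. finite (Oc l))"
    have fl0: "finite (Oc l0)" unfolding l0_def using True by (metis LeastI)
    have "l0 \<noteq> 0" using fl0 O0 by (metis)
    then obtain j where jl: "l0 = j + 1" by (metis Suc_eq_plus1 not0_implies_Suc)
    have infj: "infinite (Oc j)" using jl unfolding l0_def
      by (metis less_add_one not_less_Least)
    have fin1: "finite (Oc (j+1))" using fl0 jl by simp
    obtain N where N: "Oc (j+1) \<subseteq> {..<N}" using finite_nat_bounded[OF fin1] by blast
    define C where "C = card {i. 0 \<le> i \<and> i<N \<and> wbar i = x}"
    define M where "M = max N (length w)"
    have "infinite (Oc j - {..<M})" using infj by simp
    then obtain B where B: "finite B" "card B = C + 1" "B \<subseteq> Oc j - {..<M}"
      using infinite_arbitrarily_large by blast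
    then have Bne: "B \<noteq> {}" by auto
    define p where "p = Max B"
    have pB: "p \<in> B" unfolding p_def using B Bne by simp
    have pO: "p \<in> Oc j" "p \<ge> M" using pB B by auto
    have sub: "B - {p} \<subseteq> {i. N \<le> i \<and> i<p \<and> wbar i = x}"
    proof
      fix i assume i: "i \<in> B - {p}"
      then have "i \<le> p" unfolding p_def using B by simp
      with i have "i < p" by auto
      moreover have "i \<ge> N" "wbar i = x" using i B Ox unfolding M_def by auto
      ultimately show "i \<in> {i. N \<le> i \<and> i<p \<and> wbar i = x}" by simp
    qed
    have "card (B - {p}) = C" using B pB by simp
    moreover have "card (B - {p}) \<le> card {i. N \<le> i \<and> i<p \<and> wbar i = x}"
      by (rule card_mono[OF _ sub]) simp
    ultimately have cnt: "C \<le> card {i. N \<le> i \<and> i<p \<and> wbar i = x}" by simp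
    have avoid: "\<forall>q. N \<le> q \<longrightarrow> q < p \<longrightarrow> map wbar [q..<q+j+2] \<noteq> x # map t [0..<j+1]"
    proof (intro allI impI)
      fix q assume "N \<le> q" "q < p"
      then have "q \<notin> Oc (j+1)" using N by auto
      then show "map wbar [q..<q+j+2] \<noteq> x # map t [0..<j+1]" unfolding Oc_def
        by (simp add: add.assoc)
    qed
    have occ: "map wbar [p..<p+j+1] = x # map t [0..<j]" using pO unfolding Oc_def by simp
    show ?thesis
      by (rule build[OF assms(3,4,6,7) _ occ avoid]) (use cnt pO in \<open>auto simp: C_def M_def\<close>)
  qed
qed

end
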